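(* Let $0\to P\to B\to R\to0$ be a short exact sequence of finite-length $\Bbbk[N]$-modules, and let $\lambda,\mu,\nu$ be the Jordan types of $N$ acting on $P$, $B$, $R$ respectively. (1) $\mu\ge\lambda+\nu$ in dominance order, where $\lambda+\nu$ is the partition whose multiset of parts is the union of the parts of $\lambda$ and of $\nu$. (2) If moreover $\lambda$ and $\mu$ are $t$-interlaced for some $t\in\mathbb Z$, then $\nu$ is not strictly greater than $\operatorname{diff}(\mu,\lambda)$ in dominance order.
   Context: A finite-length $\Bbbk[N]$-module is a finite-dimensional vector space with a nilpotent operator $N$; its Jordan type is the partition of block sizes. Dominance order: $\gamma\le\kappa$ if $\gamma_1+\dots+\gamma_k\le\kappa_1+\dots+\kappa_k$ for all $k$ (parts padded with zeros). For $t\ge0$, $\lambda,\mu$ are $t$-interlaced if $\mu_1\ge\dots\ge\mu_{t+1}\ge\lambda_1\ge\mu_{t+2}\ge\mu_{t+3}\ge\lambda_2\ge\mu_{t+4}\ge\mu_{t+5}\ge\lambda_3\ge\cdots$ (all partitions padded with infinitely many zeros), and then $\operatorname{diff}(\mu,\lambda)=(\mu_1,\dots,\mu_t,\mu_{t+1}+\mu_{t+2}-\lambda_1,\mu_{t+3}+\mu_{t+4}-\lambda_2,\dots)$. For $t\le0$, they are $t$-interlaced if $\lambda_i=\mu_i$ for $i\le-t$ and $\mu_{-t+1}\ge\lambda_{-t+1}\ge\mu_{-t+2}\ge\mu_{-t+3}\ge\lambda_{-t+2}\ge\mu_{-t+4}\ge\mu_{-t+5}\ge\lambda_{-t+3}\ge\cdots$,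 and then $\operatorname{diff}(\mu,\lambda)=(\mu_{-t+1}+\mu_{-t+2}-\lambda_{-t+1},\mu_{-t+3}+\mu_{-t+4}-\lambda_{-t+2},\dots)$. *)

theory Defs
  imports Complex_Main
begin

definition is_partition :: "nat list \<Rightarrow> bool" where
  "is_partition xs \<longleftrightarrow> sorted_wrt (\<ge>) xs \<and> 0 \<notin> set xs"

definition part :: "nat list \<Rightarrow> nat \<Rightarrow> nat" where
  "part xs i = (if i < length xs then xs ! i else 0)"

text \<open>Dominance order on zero-padded sequences (index 0 is the first part).\<close>
definition dominated :: "(nat \<Rightarrow> nat) \<Rightarrow> (nat \<Rightarrow> nat) \<Rightarrow> bool" where
  "dominated g k \<longleftrightarrow> (\<forall>n. (\<Sum>i<n. g i) \<le> (\<Sum>i<n. k i))"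

definition strictly_dominated :: "(nat \<Rightarrow> nat) \<Rightarrow> (nat \<Rightarrow> nat) \<Rightarrow> bool" where
  "strictly_dominated g k \<longleftrightarrow> dominated g k \<and> g \<noteq> k"

definition part_union :: "nat list \<Rightarrow> nat list \<Rightarrow> nat list" where
  "part_union l n = rev (sort (l @ n))"

text \<open>t-interlacing (0-indexed translation of the paper's 1-indexed definition).\<close>
definition interlaced :: "int \<Rightarrow> nat list \<Rightarrow> nat list \<Rightarrow> bool" where
  "interlaced t lam mu \<longleftrightarrow>
     (if t \<ge> 0 then
        (let s = nat t in \<forall>i. part mu (s + 2*i) \<ge> part lam i \<and> part lam i \<ge> part mu (s + 2*i + 1))
      else
        (let s = nat (- t) in
           (\<forall>i<s. part lam i = part mu i) \<and>
           (\<forall>i. part mu (s + 2*i) \<ge> part lam (s + i) \<and> part lam (s + i) \<ge> part mu (s + 2*i + 1))))"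

definition diff :: "int \<Rightarrow> nat list \<Rightarrow> nat list \<Rightarrow> nat \<Rightarrow> nat" where
  "diff t mu lam j =
     (if t \<ge> 0 then
        (let s = nat t in if j < s then part mu j
             else part mu (s + 2*(j-s)) + part mu (s + 2*(j-s) + 1) - part lam (j-s))
      else
        (let s = nat (- t) in part mu (s + 2*j) + part mu (s + 2*j + 1) - part lam (s + j)))"

text \<open>A finite-length k[N]-module: a finite-dimensional k-vector space (the whole
  type 'v with scalar multiplication s) with a nilpotent linear operator N.\<close>
definition fl_module :: "('k::field \<Rightarrow> 'v::ab_group_add \<Rightarrow> 'v) \<Rightarrow> ('v \<Rightarrow> 'v) \<Rightarrow> bool" where
  "fl_module s N \<longleftrightarrow> vector_space s \<and> (\<exists>B. finite B \<and> Modules.module.span s B = UNIV)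
     \<and> Vector_Spaces.linear s s N \<and> (\<exists>n. (N ^^ n) = (\<lambda>_. 0))"

definition kN_hom :: "('k::field \<Rightarrow> 'v::ab_group_add \<Rightarrow> 'v) \<Rightarrow> ('v \<Rightarrow> 'v)
    \<Rightarrow> ('k \<Rightarrow> 'w::ab_group_add \<Rightarrow> 'w) \<Rightarrow> ('w \<Rightarrow> 'w) \<Rightarrow> ('v \<Rightarrow> 'w) \<Rightarrow> bool" where
  "kN_hom s1 N1 s2 N2 f \<longleftrightarrow> Vector_Spaces.linear s1 s2 f \<and> (\<forall>v. f (N1 v) = N2 (f v))"

definition short_exact where
  "short_exact sP NP sB NB sR NR f g \<longleftrightarrow>
     kN_hom sP NP sB NB f \<and> kN_hom sB NB sR NR g \<and>
     inj f \<and> range f = {b. g b = 0} \<and> surj g"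

text \<open>Jordan type: lam is the partition of Jordan block sizes, i.e. there are
  vectors v_j (one per block) such that the vectors N^k v_j (k < lam_j) are pairwise
  distinct and form a basis, and N^(lam_j) v_j = 0.\<close>
definition jordan_type :: "('k::field \<Rightarrow> 'v::ab_group_add \<Rightarrow> 'v) \<Rightarrow> ('v \<Rightarrow> 'v) \<Rightarrow> nat list \<Rightarrow> bool" where
  "jordan_type s N lam \<longleftrightarrow> is_partition lam \<and>
     (\<exists>vs :: 'v list. length vs = length lam \<and>
        (\<forall>j<length lam. (N ^^ (lam ! j)) (vs ! j) = 0) \<and>
        inj_on (\<lambda>(j,k). (N ^^ k) (vs ! j)) {(j,k). j < length lam \<and> k < lam ! j} \<and>
        \<not> Modules.module.dependent s ((\<lambda>(j,k). (N ^^ k) (vs ! j)) ` {(j,k). j < length lam \<and> k < lam ! j}) \<and>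
        Modules.module.span s ((\<lambda>(j,k). (N ^^ k) (vs ! j)) ` {(j,k). j < length lam \<and> k < lam ! j}) = UNIV)"

end

theory Submission
  imports Defs
begin


definition jb :: "('v \<Rightarrow> 'v) \<Rightarrow> 'v list \<Rightarrow> nat \<times> nat \<Rightarrow> 'v" where
  "jb N vs = (\<lambda>(j,k). (N ^^ k) (vs ! j))"

definition jidx :: "nat list \<Rightarrow> (nat \<times> nat) set" where
  "jidx lam = {(j,k). j < length lam \<and> k < lam ! j}"

lemma linear_zero_map: "Vector_Spaces.linear s1 s2 h \<Longrightarrow> h 0 = 0"
  by (simp add: module_hom.zero linear_iff_module_hom)

lemma linear_funpow:
  assumes "vector_space s" "Vector_Spaces.linear s s N"
  shows "Vector_Spaces.linear s s (N ^^ k)"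
proof (induction k)
  case 0
  then show ?case using vector_space.linear_ident[OF assms(1)] by (simp add: id_def)
next
  case (Suc k)
  then show ?case using Vector_Spaces.linear_compose[OF Suc assms(2)] by (simp add: comp_def)
qed

lemma funpow_commute:
  assumes "\<forall>v. g (N1 v) = N2 (g v)"
  shows "g ((N1 ^^ k) v) = (N2 ^^ k) (g v)"
  by (induction k) (simp_all add: assms)

lemma range_in_span:
  assumes vs: "vector_space s" and lin: "Vector_Spaces.linear s s N"
    and len: "length vs = length lam"
    and nil: "\<forall>j<length lam. (N ^^ (lam ! j)) (vs ! j) = 0"
    and sp: "module.span s (jb N vs ` jidx lam) = UNIV"
  shows "(N ^^ k) y \<in> module.span s (jb N vs ` {(j,m). j < length lam \<and> k \<le> m \<and> m < lam ! j})"
proof -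
  interpret V: vector_space s by fact
  interpret L: Vector_Spaces.linear s s "N ^^ k" using linear_funpow[OF vs lin] .
  let ?T = "jb N vs ` {(j,m). j < length lam \<and> k \<le> m \<and> m < lam ! j}"
  have y: "y \<in> V.span (jb N vs ` jidx lam)" using sp by simp
  have sub: "(N ^^ k) ` (jb N vs ` jidx lam) \<subseteq> V.span ?T"
  proof
    fix z assume "z \<in> (N ^^ k) ` (jb N vs ` jidx lam)"
    then obtain j m where jm: "j < length lam" "m < lam ! j" and z: "z = (N ^^ k) ((N ^^ m) (vs ! j))"
      by (auto simp: jidx_def jb_def)
    have z2: "z = (N ^^ (k + m)) (vs ! j)" using z by (simp add: funpow_add)
    show "z \<in> V.span ?T"
    proof (cases "k + m < lam ! j")
      case True
      then have "z \<in> ?T" using jm z2 by (auto simp: jb_def intro!: image_eqI[where x="(j, k+m)"])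
      then show ?thesis by (rule V.span_base)
    next
      case False
      have "N ^^ (k + m) = N ^^ (k + m - lam ! j) \<circ> N ^^ (lam ! j)"
        using False by (simp add: funpow_add[symmetric])
      then have "z = (N ^^ (k + m - lam ! j)) 0" using z2 nil jm by simp
      also have "\<dots> = 0" using linear_zero_map[OF linear_funpow[OF vs lin]] .
      finally show ?thesis using V.span_zero by simp
    qed
  qed
  have "(N ^^ k) y \<in> (N ^^ k) ` V.span (jb N vs ` jidx lam)" using y by blast
  also have "\<dots> = V.span ((N ^^ k) ` (jb N vs ` jidx lam))" using L.span_image by simp
  also have "\<dots> \<subseteq> V.span (V.span ?T)" using sub V.span_mono by blast
  also have "\<dots> = V.span ?T" by (simp add: V.span_span)
  finally show ?thesis .
qed



lemma indep_union:
  assumes vB: "vector_space sB" and vR: "vector_space sR"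
    and lg: "Vector_Spaces.linear sB sR g"
    and fin: "finite X"
    and iA: "\<not> module.dependent sB A"
    and iX: "\<not> module.dependent sR (g ` X)"
    and inj: "inj_on g X"
    and gA: "\<forall>x\<in>A. g x = 0"
  shows "\<not> module.dependent sB (A \<union> X)"
  using fin iX inj
proof (induction X rule: finite_induct)
  case empty
  then show ?case using iA by simp
next
  case (insert x X)
  interpret B: vector_space sB by fact
  interpret R: vector_space sR by fact
  interpret G: Vector_Spaces.linear sB sR g by fact
  have iX': "\<not> R.dependent (g ` X)" using insert.prems(1) R.independent_mono by blast
  have injX: "inj_on g X" using insert.prems(2) by (simp add: inj_on_insert)
  have IH: "\<not> B.dependent (A \<union> X)" using insert.IH iX' injX by blast
  have gx: "g x \<notin> g ` X" using insert.prems(2) insert.hyps(2) by (simp add: inj_on_insert)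
  have gxspan: "g x \<notin> R.span (g ` X)"
    using insert.prems(1) gx by (simp add: R.independent_insert)
  show ?case
  proof (cases "x \<in> A \<union> X")
    case True
    then show ?thesis using IH by (simp add: insert_absorb)
  next
    case False
    have "x \<notin> B.span (A \<union> X)"
    proof
      assume "x \<in> B.span (A \<union> X)"
      then have "g x \<in> g ` B.span (A \<union> X)" by blast
      also have "\<dots> = R.span (g ` (A \<union> X))" using G.span_image by simp
      also have "\<dots> \<subseteq> R.span (insert 0 (g ` X))"
        using gA by (intro R.span_mono) auto
      also have "\<dots> = R.span (g ` X)" by simp
      finally show False using gxspan by blast
    qed
    then show ?thesis using IH False by (simp add: B.independent_insert)
  qed
qed

lemma sum_part_le:
  "(\<Sum>i<length xs. xs ! i) = (\<Sum>i<a. part xs i) + (\<Sum>i\<in>{i. a \<le> i \<and> i < length xs}. xs ! i)"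
proof (cases "a \<le> length xs")
  case True
  have "{..<length xs} = {..<a} \<union> {i. a \<le> i \<and> i < length xs}" using True by auto
  then have "(\<Sum>i<length xs. xs ! i) = (\<Sum>i<a. xs ! i) + (\<Sum>i\<in>{i. a \<le> i \<and> i < length xs}. xs ! i)"
    by (simp add: sum.union_disjoint disjoint_iff)
  moreover have "(\<Sum>i<a. xs ! i) = (\<Sum>i<a. part xs i)" using True by (intro sum.cong) (auto simp: part_def)
  ultimately show ?thesis by simp
next
  case False
  have e: "{i. a \<le> i \<and> i < length xs} = {}" using False by auto
  have "(\<Sum>i<a. part xs i) = (\<Sum>i<length xs. part xs i)"
    using False by (intro sum.mono_neutral_right) (auto simp: part_def)
  also have "\<dots> = (\<Sum>i<length xs. xs ! i)" by (intro sum.cong) (auto simp: part_def)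
  finally show ?thesis using e by (simp only:) simp
qed

lemma card_idx:
  "card {(j,m). j < n \<and> j < length xs \<and> m < xs ! j} = (\<Sum>j<n. part xs j)"
proof -
  have "{(j,m). j < n \<and> j < length xs \<and> m < xs ! j} = Sigma {j. j < n \<and> j < length xs} (\<lambda>j. {..<xs ! j})"
    by auto
  then have "card {(j,m). j < n \<and> j < length xs \<and> m < xs ! j} = (\<Sum>j\<in>{j. j < n \<and> j < length xs}. xs ! j)"
    by (simp add: card_SigmaI)
  also have "\<dots> = (\<Sum>j<n. part xs j)"
    by (intro sum.mono_neutral_cong_left) (auto simp: part_def)
  finally show ?thesis .
qed

lemma card_jidx: "card (jidx xs) = (\<Sum>j<length xs. xs ! j)"
proof -
  have "jidx xs = Sigma {..<length xs} (\<lambda>j. {..<xs ! j})" by (auto simp: jidx_def)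
  then show ?thesis by (simp add: card_SigmaI)
qed

lemma card_WI: "card {(i,m). a \<le> i \<and> i < length xs \<and> m < xs ! i} = (\<Sum>i\<in>{i. a \<le> i \<and> i < length xs}. xs ! i)"
proof -
  have "{(i,m). a \<le> i \<and> i < length xs \<and> m < xs ! i} = Sigma {i. a \<le> i \<and> i < length xs} (\<lambda>j. {..<xs ! j})" by auto
  then show ?thesis by (simp add: card_SigmaI)
qed

lemma card_TB: "card {(j,m). j < length xs \<and> k \<le> m \<and> m < xs ! j} = (\<Sum>j<length xs. xs ! j - k)"
proof -
  have "{(j,m). j < length xs \<and> k \<le> m \<and> m < xs ! j} = Sigma {..<length xs} (\<lambda>j. {k..<xs ! j})" by auto
  then show ?thesis by (simp add: card_SigmaI)
qed

lemma lemmaC: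
  assumes "sorted_wrt (\<ge>) xs"
  shows "p * part xs p + (\<Sum>j<length xs. xs ! j - part xs p) = (\<Sum>j<p. part xs j)"
proof (cases "p < length xs")
  case False
  then have "part xs p = 0" by (simp add: part_def)
  moreover have "(\<Sum>j<p. part xs j) = (\<Sum>j<length xs. part xs j)"
    using False by (intro sum.mono_neutral_right) (auto simp: part_def)
  moreover have "(\<Sum>j<length xs. part xs j) = (\<Sum>j<length xs. xs ! j)" by (intro sum.cong) (auto simp: part_def)
  ultimately show ?thesis by simp
next
  case True
  define c where "c = xs ! p"
  have pc: "part xs p = c" using True by (simp add: part_def c_def)
  have ge: "j < p \<Longrightarrow> xs ! j \<ge> c" for j using assms True unfolding c_def by (simp add: sorted_wrt_iff_nth_less)
  have le: "p \<le> j \<Longrightarrow> j < length xs \<Longrightarrow> xs ! j \<le> c" for j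
    using assms unfolding c_def by (cases "p = j") (auto simp: sorted_wrt_iff_nth_less)
  have "(\<Sum>j<length xs. xs ! j - c) = (\<Sum>j<p. xs ! j - c)"
    using True le by (intro sum.mono_neutral_right) auto
  moreover have "p * c + (\<Sum>j<p. xs ! j - c) = (\<Sum>j<p. xs ! j)"
  proof -
    have "p * c + (\<Sum>j<p. xs ! j - c) = (\<Sum>j<p. (xs ! j - c) + c)" by (simp add: sum.distrib)
    also have "\<dots> = (\<Sum>j<p. xs ! j)" using ge by (intro sum.cong) auto
    finally show ?thesis .
  qed
  moreover have "(\<Sum>j<p. xs ! j) = (\<Sum>j<p. part xs j)" using True by (intro sum.cong) (auto simp: part_def)
  ultimately show ?thesis using pc by simp
qed



lemma key:
  fixes sP :: "'k::field \<Rightarrow> 'p::ab_group_add \<Rightarrow> 'p" and NP :: "'p \<Rightarrow> 'p"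
    and sB :: "'k \<Rightarrow> 'b::ab_group_add \<Rightarrow> 'b" and NB :: "'b \<Rightarrow> 'b"
    and sR :: "'k \<Rightarrow> 'r::ab_group_add \<Rightarrow> 'r" and NR :: "'r \<Rightarrow> 'r"
    and f :: "'p \<Rightarrow> 'b" and g :: "'b \<Rightarrow> 'r"
    and lam mu nu :: "nat list" and vP :: "'p list" and vB :: "'b list" and vR :: "'r list"
  assumes vsP: "vector_space sP" and vsB: "vector_space sB" and vsR: "vector_space sR"
    and linNB: "Vector_Spaces.linear sB sB NB"
    and lf: "Vector_Spaces.linear sP sB f" and lg: "Vector_Spaces.linear sB sR g"
    and cf: "\<forall>v. f (NP v) = NB (f v)" and cg: "\<forall>v. g (NB v) = NR (g v)"
    and injf: "inj f" and gf: "\<forall>p. g (f p) = 0" and surjg: "surj g"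
    and smu: "sorted_wrt (\<ge>) mu"
    and Pinj: "inj_on (jb NP vP) (jidx lam)"
    and Pind: "\<not> module.dependent sP (jb NP vP ` jidx lam)"
    and Blen: "length vB = length mu"
    and Bnil: "\<forall>j<length mu. (NB ^^ (mu ! j)) (vB ! j) = 0"
    and Bsp: "module.span sB (jb NB vB ` jidx mu) = UNIV"
    and Rinj: "inj_on (jb NR vR) (jidx nu)"
    and Rind: "\<not> module.dependent sR (jb NR vR ` jidx nu)"
  shows "(\<Sum>j<n. part nu j) + (\<Sum>i<a. part lam i) \<le> (\<Sum>j<n+a. part mu j)"
proof -
  interpret P: vector_space sP by fact
  interpret B: vector_space sB by fact
  interpret R: vector_space sR by fact
  interpret LF: Vector_Spaces.linear sP sB f by fact
  interpret LG: Vector_Spaces.linear sB sR g by fact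
  define k where "k = part mu (n + a)"
  define b where "b j = (SOME x. g x = vR ! j)" for j
  have gb: "g (b j) = vR ! j" for j
    unfolding b_def by (rule someI_ex) (use surjg in \<open>metis surj_def\<close>)
  define \<phi> where "\<phi> = (\<lambda>(j,m). (NB ^^ m) (b j))"
  define \<psi> where "\<psi> = (\<lambda>(i,m). f ((NP ^^ m) (vP ! i)))"
  define K where "K = {(j,m). j < n \<and> j < length nu \<and> m < nu ! j}"
  define TB where "TB = {(j,m). j < length mu \<and> k \<le> m \<and> m < mu ! j}"
  define WI where "WI = {(i,m). a \<le> i \<and> i < length lam \<and> m < lam ! i}"
  define Y where "Y = \<phi> ` ({..<n} \<times> {..<k}) \<union> \<psi> ` ({..<a} \<times> {..<k}) \<union> jb NB vB ` TB"
  define W where "W = \<psi> ` WI"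
  define I where "I = \<psi> ` jidx lam"
  define X where "X = \<phi> ` K"
  have g\<phi>: "g (\<phi> (j,m)) = jb NR vR (j,m)" for j m
    unfolding \<phi>_def jb_def using funpow_commute[OF cg] gb by simp
  have \<psi>eq: "\<psi> (i,m) = (NB ^^ m) (f (vP ! i))" for i m
    unfolding \<psi>_def using funpow_commute[OF cf] by simp
  have \<psi>comp: "\<psi> = f \<circ> jb NP vP" unfolding \<psi>_def jb_def by auto
  have finK: "finite K" unfolding K_def by (rule finite_subset[of _ "Sigma {..<length nu} (\<lambda>j. {..<nu ! j})"]) auto
  have finTB: "finite TB" unfolding TB_def
    by (rule finite_subset[of _ "Sigma {..<length mu} (\<lambda>j. {..<mu ! j})"]) auto
  have finWI: "finite WI" unfolding WI_def
    by (rule finite_subset[of _ "Sigma {..<length lam} (\<lambda>j. {..<lam ! j})"]) auto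
  have finJ: "finite (jidx lam)" unfolding jidx_def
    by (rule finite_subset[of _ "Sigma {..<length lam} (\<lambda>j. {..<lam ! j})"]) auto
  have finYW: "finite (Y \<union> W)" unfolding Y_def W_def using finTB finWI by auto
  have big: "(NB ^^ m) y \<in> B.span (Y \<union> W)" if "k \<le> m" for m y
  proof -
    have "NB ^^ m = NB ^^ k \<circ> NB ^^ (m - k)"
      using that by (metis funpow_add le_add_diff_inverse)
    then have "(NB ^^ m) y = (NB ^^ k) ((NB ^^ (m - k)) y)" by simp
    also have "\<dots> \<in> B.span (jb NB vB ` TB)"
      unfolding TB_def by (rule range_in_span[OF vsB linNB Blen Bnil Bsp])
    also have "\<dots> \<subseteq> B.span (Y \<union> W)" by (rule B.span_mono) (auto simp: Y_def)
    finally show ?thesis .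
  qed
  have XI: "X \<subseteq> B.span (Y \<union> W)"
  proof
    fix x assume "x \<in> X"
    then obtain j m where jm: "(j,m) \<in> K" and x: "x = \<phi> (j,m)" unfolding X_def by auto
    show "x \<in> B.span (Y \<union> W)"
    proof (cases "m < k")
      case True
      then have "x \<in> Y" using jm x unfolding Y_def K_def by auto
      then show ?thesis by (intro B.span_base) simp
    next
      case False
      then show ?thesis using big[of m "b j"] x by (simp add: \<phi>_def)
    qed
  qed
  have II: "I \<subseteq> B.span (Y \<union> W)"
  proof
    fix x assume "x \<in> I"
    then obtain i m where im: "(i,m) \<in> jidx lam" and x: "x = \<psi> (i,m)" unfolding I_def by auto
    show "x \<in> B.span (Y \<union> W)"
    proof (cases "a \<le> i")
      case True
      then have "x \<in> W" using im x unfolding W_def WI_def jidx_def by auto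
      then show ?thesis by (intro B.span_base) simp
    next
      case False
      show ?thesis
      proof (cases "m < k")
        case True
        then have "x \<in> Y" using False im x unfolding Y_def by auto
        then show ?thesis by (intro B.span_base) simp
      next
        case False
        then show ?thesis using big[of m "f (vP ! i)"] x \<psi>eq by simp
      qed
    qed
  qed
  have indI: "\<not> B.dependent I"
    unfolding I_def \<psi>comp image_comp[symmetric]
    by (rule LF.independent_injective_image[OF Pind]) (use injf in \<open>simp add: inj_on_def inj_def\<close>)
  have g\<phi>': "(g \<circ> \<phi>) x = jb NR vR x" for x
    using g\<phi>[of "fst x" "snd x"] by simp
  have gX: "g ` X = jb NR vR ` K" unfolding X_def image_comp
    by (rule image_cong) (simp_all add: g\<phi>'[unfolded comp_def])
  have KJ: "K \<subseteq> jidx nu" unfolding K_def jidx_def by auto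
  have indgX: "\<not> R.dependent (g ` X)" unfolding gX
    using R.independent_mono[OF Rind] KJ by blast
  have injg\<phi>: "inj_on (g \<circ> \<phi>) K"
  proof -
    have "inj_on (jb NR vR) K" using Rinj KJ inj_on_subset by blast
    moreover have "(g \<circ> \<phi>) x = jb NR vR x" for x
      using g\<phi>[of "fst x" "snd x"] by simp
    ultimately show ?thesis by (simp add: comp_def)
  qed
  have injgX: "inj_on g X"
  proof (rule inj_onI)
    fix x y assume "x \<in> X" "y \<in> X" and e: "g x = g y"
    then obtain u v where uv: "u \<in> K" "v \<in> K" "x = \<phi> u" "y = \<phi> v" unfolding X_def by blast
    then have "(g \<circ> \<phi>) u = (g \<circ> \<phi>) v" using e by simp
    then have "u = v" using inj_onD[OF injg\<phi>] uv by blast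
    then show "x = y" using uv by simp
  qed
  have gI: "\<forall>x\<in>I. g x = 0" unfolding I_def \<psi>_def using gf by auto
  have finX: "finite X" unfolding X_def using finK by simp
  have indIX: "\<not> B.dependent (I \<union> X)"
    by (rule indep_union[OF vsB vsR lg finX indI indgX injgX gI])
  have "card (I \<union> X) \<le> card (Y \<union> W)"
    using B.independent_span_bound[OF finYW indIX] XI II by auto
  moreover have "card (I \<union> X) = card I + card X"
  proof (rule card_Un_disjoint)
    show "finite I" unfolding I_def using finJ by simp
    show "finite X" by fact
    show "I \<inter> X = {}"
    proof (rule ccontr)
      assume "I \<inter> X \<noteq> {}"
      then obtain x where "x \<in> I" "x \<in> X" by blast
      then have "g x = 0" "g x \<in> g ` X" using gI by auto
      then have "R.dependent (g ` X)" using R.dependent_zero by metis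
      then show False using indgX by blast
    qed
  qed
  moreover have "card I = card (jidx lam)"
    unfolding I_def \<psi>comp by (rule card_image, rule comp_inj_on[OF Pinj]) (use injf in \<open>auto simp: inj_on_def inj_def\<close>)
  moreover have "card X = card K"
    unfolding X_def by (rule card_image) (use injg\<phi> inj_on_imageI2 in blast)
  moreover have "card (Y \<union> W) \<le> n * k + a * k + card TB + card WI"
  proof -
    have "card (Y \<union> W) \<le> card Y + card W" by (rule card_Un_le)
    moreover have "card Y \<le> n * k + a * k + card TB"
    proof -
      have "card Y \<le> card (\<phi> ` ({..<n} \<times> {..<k}) \<union> \<psi> ` ({..<a} \<times> {..<k})) + card (jb NB vB ` TB)"
        unfolding Y_def by (rule card_Un_le)
      moreover have "card (\<phi> ` ({..<n} \<times> {..<k}) \<union> \<psi> ` ({..<a} \<times> {..<k})) \<le> n * k + a * k"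
      proof -
        have "card (\<phi> ` ({..<n} \<times> {..<k}) \<union> \<psi> ` ({..<a} \<times> {..<k})) \<le> card (\<phi> ` ({..<n} \<times> {..<k})) + card (\<psi> ` ({..<a} \<times> {..<k}))"
          by (rule card_Un_le)
        moreover have "card (\<phi> ` ({..<n} \<times> {..<k})) \<le> n * k"
          using card_image_le[of "{..<n} \<times> {..<k}" \<phi>] by (simp add: card_cartesian_product)
        moreover have "card (\<psi> ` ({..<a} \<times> {..<k})) \<le> a * k"
          using card_image_le[of "{..<a} \<times> {..<k}" \<psi>] by (simp add: card_cartesian_product)
        ultimately show ?thesis by linarith
      qed
      moreover have "card (jb NB vB ` TB) \<le> card TB" using finTB by (rule card_image_le)
      ultimately show ?thesis by linarith
    qed
    moreover have "card W \<le> card WI" unfolding W_def using finWI by (rule card_image_le)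
    ultimately show ?thesis by linarith
  qed
  moreover have "card K = (\<Sum>j<n. part nu j)" unfolding K_def by (rule card_idx)
  moreover have "card (jidx lam) = (\<Sum>i<a. part lam i) + card WI"
    unfolding card_jidx WI_def card_WI by (rule sum_part_le)
  moreover have "card TB = (\<Sum>j<length mu. mu ! j - k)" unfolding TB_def by (rule card_TB)
  moreover have "(n + a) * k + (\<Sum>j<length mu. mu ! j - k) = (\<Sum>j<n+a. part mu j)"
    unfolding k_def by (rule lemmaC[OF smu])
  moreover have "(n + a) * k = n * k + a * k" by (simp add: add_mult_distrib)
  ultimately show ?thesis by linarith
qed



fun mrg :: "nat list \<Rightarrow> nat list \<Rightarrow> nat list" where
  "mrg [] ys = ys"
| "mrg xs [] = xs"
| "mrg (x#xs) (y#ys) = (if y \<le> x then x # mrg xs (y#ys) else y # mrg (x#xs) ys)"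

lemma count_mrg: "count_list (mrg xs ys) z = count_list xs z + count_list ys z"
  by (induction xs ys rule: mrg.induct) auto

lemma set_mrg: "set (mrg xs ys) = set xs \<union> set ys"
  by (induction xs ys rule: mrg.induct) auto

lemma count_insort: "count_list (insort x xs) z = count_list (x # xs) z"
  by (induction xs) auto

lemma count_sort: "count_list (sort xs) z = count_list xs z"
  by (induction xs) (auto simp: count_insort)

lemma sorted_count_unique:
  "sorted (xs::nat list) \<Longrightarrow> sorted ys \<Longrightarrow> (\<forall>k. count_list xs k = count_list ys k) \<Longrightarrow> xs = ys"
proof (induction xs arbitrary: ys)
  case Nil
  show ?case
  proof (cases ys)
    case (Cons y ys')
    have "count_list ys y \<noteq> 0" using Cons by simp
    then show ?thesis using Nil.prems(3) by simp
  qed simp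
next
  case (Cons x xs)
  have cx: "count_list ys x \<noteq> 0" using Cons.prems(3) by (metis count_list.simps(2) add_is_0 one_neq_zero)
  then obtain y ys' where ys: "ys = y # ys'" by (cases ys) auto
  have xin: "x \<in> set ys" using cx count_list_0_iff by metis
  have "count_list (x # xs) y \<noteq> 0" using Cons.prems(3) ys by (metis count_list.simps(2) add_is_0 one_neq_zero)
  then have yin: "y \<in> set (x # xs)" using count_list_0_iff by metis
  have "x \<le> y" using Cons.prems(1) yin by auto
  moreover have "y \<le> x" using Cons.prems(2) xin ys by auto
  ultimately have xy: "x = y" by simp
  have "count_list xs k = count_list ys' k" for k
  proof -
    have "count_list (x # xs) k = count_list (y # ys') k" using Cons.prems(3) ys by simp
    then show ?thesis using xy by (simp split: if_splits)
  qed
  then have "xs = ys'" using Cons.IH Cons.prems(1,2) ys by auto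
  then show ?case using ys xy by simp
qed

lemma sorted_mrg: "sorted_wrt (\<ge>) xs \<Longrightarrow> sorted_wrt (\<ge>) ys \<Longrightarrow> sorted_wrt (\<ge>) (mrg xs ys)"
  by (induction xs ys rule: mrg.induct) (auto simp: set_mrg)

lemma part_union_mrg:
  assumes "sorted_wrt (\<ge>) l" "sorted_wrt (\<ge>) m"
  shows "part_union l m = mrg l m"
proof -
  have "sort (l @ m) = rev (mrg l m)"
    by (rule sorted_count_unique) (simp_all add: count_sort count_mrg sorted_wrt_rev sorted_mrg assms)
  then show ?thesis unfolding part_union_def by simp
qed

lemma part_Cons_Suc [simp]: "part (x # zs) (Suc i) = part zs i" by (simp add: part_def)
lemma part_Cons_0 [simp]: "part (x # zs) 0 = x" by (simp add: part_def)

lemma sum_part_Cons: "(\<Sum>i<Suc N. part (x # zs) i) = x + (\<Sum>i<N. part zs i)"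
  by (subst sum.lessThan_Suc_shift) simp

lemma sum_part_mrg:
  "\<exists>a b. a + b = N \<and> (\<Sum>i<N. part (mrg xs ys) i) = (\<Sum>i<a. part xs i) + (\<Sum>i<b. part ys i)"
proof (induction xs ys arbitrary: N rule: mrg.induct)
  case (1 ys)
  then show ?case apply (rule exI[of _ 0], rule exI[of _ N]) by simp
next
  case (2 v va)
  then show ?case apply (rule exI[of _ N], rule exI[of _ 0]) by simp
next
  case (3 x xs y ys)
  show ?case
  proof (cases N)
    case 0
    then show ?thesis by simp
  next
    case (Suc N')
    show ?thesis
    proof (cases "y \<le> x")
      case True
      obtain a b where ab: "a + b = N'" "(\<Sum>i<N'. part (mrg xs (y#ys)) i) = (\<Sum>i<a. part xs i) + (\<Sum>i<b. part (y#ys) i)"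
        using "3.IH"(1)[OF True, of N'] by blast
      show ?thesis apply (rule exI[of _ "Suc a"], rule exI[of _ b])
        using True ab Suc by (simp del: sum.lessThan_Suc add: sum_part_Cons)
    next
      case False
      obtain a b where ab: "a + b = N'" "(\<Sum>i<N'. part (mrg (x#xs) ys) i) = (\<Sum>i<a. part (x#xs) i) + (\<Sum>i<b. part ys i)"
        using "3.IH"(2)[OF False, of N'] by blast
      show ?thesis apply (rule exI[of _ a], rule exI[of _ "Suc b"])
        using False ab Suc by (simp del: sum.lessThan_Suc add: sum_part_Cons)
    qed
  qed
qed

lemma part1:
  assumes "sorted_wrt (\<ge>) lam" "sorted_wrt (\<ge>) nu"
    and H: "\<And>n a. (\<Sum>j<n. part nu j) + (\<Sum>i<a. part lam i) \<le> (\<Sum>j<n+a. part mu j)"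
  shows "dominated (part (part_union lam nu)) (part mu)"
  unfolding dominated_def part_union_mrg[OF assms(1,2)]
proof
  fix N
  obtain a b where "a + b = N" "(\<Sum>i<N. part (mrg lam nu) i) = (\<Sum>i<a. part lam i) + (\<Sum>i<b. part nu i)"
    using sum_part_mrg by blast
  then show "(\<Sum>i<N. part (mrg lam nu) i) \<le> (\<Sum>i<N. part mu i)"
    using H[of b a] by (simp add: add.commute)
qed

lemma dom_antisym_eq:
  assumes "dominated g h" "dominated h g" shows "g = h"
proof
  fix j
  have "(\<Sum>i<n. g i) = (\<Sum>i<n. h i)" for n using assms unfolding dominated_def by (meson le_antisym)
  from this[of "Suc j"] this[of j] show "g j = h j" by simp
qed

lemma part2:
  assumes H: "\<And>n a. (\<Sum>j<n. part nu j) + (\<Sum>i<a. part lam i) \<le> (\<Sum>j<n+a. part mu j)"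
    and il: "interlaced t lam mu"
  shows "dominated (part nu) (diff t mu lam)"
  unfolding dominated_def
proof
  fix n
  show "(\<Sum>j<n. part nu j) \<le> (\<Sum>j<n. diff t mu lam j)"
  proof (cases "t \<ge> 0")
    case True
    define s where "s = nat t"
    have d: "diff t mu lam j = (if j < s then part mu j
             else part mu (s + 2*(j-s)) + part mu (s + 2*(j-s) + 1) - part lam (j-s))" for j
      using True unfolding diff_def s_def Let_def by simp
    show ?thesis
    proof (cases "n \<le> s")
      case True
      have "(\<Sum>j<n. diff t mu lam j) = (\<Sum>j<n. part mu j)" using True by (intro sum.cong) (auto simp: d)
      then show ?thesis using H[of n 0] by simp
    next
      case False
      define a where "a = n - s"
      have Q: "(\<Sum>j<s+2*a'. part mu j) \<le> (\<Sum>j<s+a'. diff t mu lam j) + (\<Sum>i<a'. part lam i)" for a'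
      proof (induction a')
        case 0
        have "(\<Sum>j<s. diff t mu lam j) = (\<Sum>j<s. part mu j)" by (intro sum.cong) (auto simp: d)
        then show ?case by simp
      next
        case (Suc a')
        have e1: "s + 2 * Suc a' = Suc (Suc (s + 2*a'))" by simp
        have e2: "diff t mu lam (s + a') = part mu (s + 2*a') + part mu (s + 2*a' + 1) - part lam a'" by (simp add: d)
        have "part mu (s + 2*a') + part mu (s + 2*a' + 1) \<le> diff t mu lam (s + a') + part lam a'" using e2 by simp
        then show ?case using Suc.IH unfolding e1 by (simp add: add.commute)
      qed
      have na: "n + a = s + 2*a" "n = s + a" using False unfolding a_def by auto
      have "(\<Sum>j<n. part nu j) + (\<Sum>i<a. part lam i) \<le> (\<Sum>j<s+2*a. part mu j)"
        using H[of n a] unfolding na(1) .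
      then show ?thesis using Q[of a] unfolding na(2)[symmetric] by linarith
    qed
  next
    case False
    define s where "s = nat (- t)"
    have d: "diff t mu lam j = part mu (s + 2*j) + part mu (s + 2*j + 1) - part lam (s + j)" for j
      using False unfolding diff_def s_def Let_def by simp
    have eq: "\<forall>i<s. part lam i = part mu i" using il False unfolding interlaced_def s_def Let_def by simp
    have Q: "(\<Sum>j<s+2*n'. part mu j) \<le> (\<Sum>j<n'. diff t mu lam j) + (\<Sum>i<s+n'. part lam i)" for n'
    proof (induction n')
      case 0
      have "(\<Sum>j<s. part lam j) = (\<Sum>j<s. part mu j)" using eq by (intro sum.cong) auto
      then show ?case by simp
    next
      case (Suc n')
      have e1: "s + 2 * Suc n' = Suc (Suc (s + 2*n'))" by simp
      have "part mu (s + 2*n') + part mu (s + 2*n' + 1) \<le> diff t mu lam n' + part lam (s + n')" by (simp add: d)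
      then show ?case using Suc.IH unfolding e1 by (simp add: add.commute)
    qed
    have na: "n + (s + n) = s + 2*n" by simp
    have "(\<Sum>j<n. part nu j) + (\<Sum>i<s+n. part lam i) \<le> (\<Sum>j<s+2*n. part mu j)"
      using H[of n "s+n"] unfolding na .
    then show ?thesis using Q[of n] by linarith
  qed
qed

lemma part2':
  assumes "dominated (part nu) d" shows "\<not> strictly_dominated d (part nu)"
  using assms dom_antisym_eq unfolding strictly_dominated_def by blast


theorem lemma3p6:
  fixes sP :: "'k::field \<Rightarrow> 'p::ab_group_add \<Rightarrow> 'p" and NP :: "'p \<Rightarrow> 'p"
    and sB :: "'k \<Rightarrow> 'b::ab_group_add \<Rightarrow> 'b" and NB :: "'b \<Rightarrow> 'b"
    and sR :: "'k \<Rightarrow> 'r::ab_group_add \<Rightarrow> 'r" and NR :: "'r \<Rightarrow> 'r"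
    and f :: "'p \<Rightarrow> 'b" and g :: "'b \<Rightarrow> 'r"
    and lam mu nu :: "nat list"
  assumes "fl_module sP NP" and "fl_module sB NB" and "fl_module sR NR"
    and "short_exact sP NP sB NB sR NR f g"
    and "jordan_type sP NP lam" and "jordan_type sB NB mu" and "jordan_type sR NR nu"
  shows "dominated (part (part_union lam nu)) (part mu) \<and>
    (\<forall>t::int. interlaced t lam mu \<longrightarrow> \<not> strictly_dominated (diff t mu lam) (part nu))"
proof -
  have vsP: "vector_space sP" using assms(1) unfolding fl_module_def by blast
  have vsB: "vector_space sB" and linNB: "Vector_Spaces.linear sB sB NB"
    using assms(2) unfolding fl_module_def by blast+
  have vsR: "vector_space sR" using assms(3) unfolding fl_module_def by blast
  have lf: "Vector_Spaces.linear sP sB f" and cf: "\<forall>v. f (NP v) = NB (f v)"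
    and lg: "Vector_Spaces.linear sB sR g" and cg: "\<forall>v. g (NB v) = NR (g v)"
    and injf: "inj f" and rf: "range f = {b. g b = 0}" and surjg: "surj g"
    using assms(4) unfolding short_exact_def kN_hom_def by blast+
  have gf: "\<forall>p. g (f p) = 0" using rf by blast
  obtain vP where Plen: "length vP = length lam"
    and Pinj: "inj_on (jb NP vP) (jidx lam)"
    and Pind: "\<not> module.dependent sP (jb NP vP ` jidx lam)"
    using assms(5) unfolding jordan_type_def jb_def jidx_def by blast
  obtain vB where Blen: "length vB = length mu"
    and Bnil: "\<forall>j<length mu. (NB ^^ (mu ! j)) (vB ! j) = 0"
    and Bsp: "module.span sB (jb NB vB ` jidx mu) = UNIV"
    using assms(6) unfolding jordan_type_def jb_def jidx_def by blast
  obtain vR where Rinj: "inj_on (jb NR vR) (jidx nu)"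
    and Rind: "\<not> module.dependent sR (jb NR vR ` jidx nu)"
    using assms(7) unfolding jordan_type_def jb_def jidx_def by blast
  have slam: "sorted_wrt (\<ge>) lam" using assms(5) unfolding jordan_type_def is_partition_def by blast
  have smu: "sorted_wrt (\<ge>) mu" using assms(6) unfolding jordan_type_def is_partition_def by blast
  have snu: "sorted_wrt (\<ge>) nu" using assms(7) unfolding jordan_type_def is_partition_def by blast
  have H: "(\<Sum>j<n. part nu j) + (\<Sum>i<a. part lam i) \<le> (\<Sum>j<n+a. part mu j)" for n a
    by (rule key[OF vsP vsB vsR linNB lf lg cf cg injf gf surjg smu Pinj Pind Blen Bnil Bsp Rinj Rind])
  show ?thesis
  proof
    show "dominated (part (part_union lam nu)) (part mu)" by (rule part1[OF slam snu H])
    show "\<forall>t::int. interlaced t lam mu \<longrightarrow> \<not> strictly_dominated (diff t mu lam) (part nu)"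
      using part2[OF H] part2' by blast
  qed
qed

end
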